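(* For every integer $N\ge 2$, the set $W_N\subset\mathbb R^{N-1}$ is closed, path connected, and has positive Lebesgue measure. Moreover, its topological boundary in $\mathbb R^{N-1}$ is $$\partial W_N=\{\mathbf w\in W_N:\mathrm{disc}(\mathbf w(x))=0\},$$ where $\mathrm{disc}$ denotes the discriminant of a polynomial.
   Context: Let $N\ge 2$ be an integer and $\mathbb T=\{z\in\mathbb C:|z|=1\}$. For $\mathbf a=(a_1,\dots,a_{N-1})\in\mathbb R^{N-1}$ define $\mathbf c=(c_1,\dots,c_{N-1})\in\mathbb C^{N-1}$ by $c_j=\frac{\sqrt2}{2}(a_j+i\,a_{N-j})$ for $1\le j<N/2$, $c_{N/2}=a_{N/2}$ (only when $N$ is even), and $c_j=\frac{\sqrt2}{2}(a_{N-j}-i\,a_j)$ for $N/2<j\le N-1$ (so $c_{N-j}=\overline{c_j}$). Associate to $\mathbf a$ the monic polynomial $\mathbf a(x)=x^N+\sum_{n=1}^{N-1}c_nx^{N-n}+1$. Define $W_N=\{\mathbf a\in\mathbb R^{N-1}:\text{all roots of }\mathbf a(x)\text{ lie in }\mathbb T\}$. *)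

theory Defs
  imports "HOL-Analysis.Analysis" "Subresultants.Resultant_Prelim"
begin

definition discriminant :: "complex poly \<Rightarrow> complex" where
  "discriminant p = (let n = degree p in
     (-1) ^ (n * (n - 1) div 2) * resultant p (pderiv p) / lead_coeff p)"

definition assoc_coeff :: "nat \<Rightarrow> (nat \<Rightarrow> real) \<Rightarrow> nat \<Rightarrow> complex" where
  "assoc_coeff N a j =
     (if 2 * j < N then complex_of_real (sqrt 2 / 2) * (complex_of_real (a j) + \<i> * complex_of_real (a (N - j)))
      else if 2 * j = N then complex_of_real (a j)
      else complex_of_real (sqrt 2 / 2) * (complex_of_real (a (N - j)) - \<i> * complex_of_real (a j)))"

definition assoc_poly :: "nat \<Rightarrow> (nat \<Rightarrow> real) \<Rightarrow> complex poly" where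
  "assoc_poly N a = monom 1 N + (\<Sum>n = 1..N-1. monom (assoc_coeff N a n) (N - n)) + 1"

text \<open>R^(N-1) is modelled as real^'n with CARD('n) = N-1 and a labelling e of the
  coordinates by {1..N-1}; coordinate a_j of w is w $ e j.\<close>
definition W_set :: "nat \<Rightarrow> (nat \<Rightarrow> 'n::finite) \<Rightarrow> (real ^ 'n) set" where
  "W_set N e = {w. \<forall>z. poly (assoc_poly N (\<lambda>j. w $ e j)) z = 0 \<longrightarrow> cmod z = 1}"

end

theory Submission
  imports Defs "Subresultants.Subresultant_Gcd" "HOL-Computational_Algebra.Field_as_Ring"
    "HOL-Computational_Algebra.Fundamental_Theorem_Algebra"
begin


lemma coeff_assoc:
  assumes N: "N \<ge> 2"
  shows "coeff (assoc_poly N a) m = (if m = N then 1 else if m = 0 then 1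
           else if m < N then assoc_coeff N a (N - m) else 0)"
proof -
  have s: "(\<Sum>n = 1..N-1. coeff (monom (assoc_coeff N a n) (N - n)) m)
        = (if 0 < m \<and> m < N then assoc_coeff N a (N - m) else 0)"
  proof (cases "0 < m \<and> m < N")
    case True
    have "(\<Sum>n = 1..N-1. coeff (monom (assoc_coeff N a n) (N - n)) m)
        = (\<Sum>n = 1..N-1. if n = N - m then assoc_coeff N a n else 0)"
      by (rule sum.cong) (use True in \<open>auto simp: coeff_monom\<close>)
    also have "\<dots> = assoc_coeff N a (N - m)" using True by (subst sum.delta) auto
    finally show ?thesis using True by simp
  next
    case False
    have "(\<Sum>n = 1..N-1. coeff (monom (assoc_coeff N a n) (N - n)) m) = (\<Sum>n = 1..N-1. 0)"
      by (rule sum.cong) (use False in \<open>auto simp: coeff_monom\<close>)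
    then show ?thesis by (simp only: if_not_P[OF False] sum.neutral_const)
  qed
  show ?thesis unfolding assoc_poly_def coeff_add coeff_sum s
    using N by (auto simp: coeff_monom coeff_1)
qed

lemma degree_assoc: "N \<ge> 2 \<Longrightarrow> degree (assoc_poly N a) = N"
proof (rule antisym)
  assume N: "N \<ge> 2"
  show "degree (assoc_poly N a) \<le> N" by (rule degree_le) (auto simp: coeff_assoc N)
  show "N \<le> degree (assoc_poly N a)" by (rule le_degree) (auto simp: coeff_assoc N)
qed

lemma lead_assoc: "N \<ge> 2 \<Longrightarrow> lead_coeff (assoc_poly N a) = 1"
  by (simp add: degree_assoc coeff_assoc)

lemma assoc_nz: "N \<ge> 2 \<Longrightarrow> assoc_poly N a \<noteq> 0"
  using lead_assoc[of N a] by auto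

lemma poly_assoc_0: "N \<ge> 2 \<Longrightarrow> poly (assoc_poly N a) 0 = 1"
  by (simp add: poly_0_coeff_0 coeff_assoc)

lemma assoc_coeff_sym:
  assumes "1 \<le> j" "j \<le> N - 1"
  shows "assoc_coeff N a (N - j) = cnj (assoc_coeff N a j)"
  using assms unfolding assoc_coeff_def
  by (auto simp: complex_eq_iff)

lemma assoc_poly_cong:
  assumes "\<And>j. 1 \<le> j \<Longrightarrow> j \<le> N - 1 \<Longrightarrow> a j = b j"
  shows "assoc_poly N a = assoc_poly N b"
proof -
  have "assoc_coeff N a n = assoc_coeff N b n" if "n \<in> {1..N-1}" for n
    using that assms[of n] assms[of "N - n"] unfolding assoc_coeff_def by auto
  then show ?thesis unfolding assoc_poly_def by (auto intro!: sum.cong)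
qed

definition sinv :: "complex poly \<Rightarrow> complex poly" where
  "sinv p = map_poly cnj (reflect_poly p)"

lemma map_poly_cnj_mult: "map_poly cnj (p * q) = map_poly cnj p * map_poly cnj (q :: complex poly)"
  by (rule poly_eq_poly_eq_iff[THEN iffD1]) (auto simp: poly_map_poly_cnj)

lemma map_poly_cnj_smult: "map_poly cnj (Polynomial.smult c p) = Polynomial.smult (cnj c) (map_poly cnj (p :: complex poly))"
  by (rule poly_eq_poly_eq_iff[THEN iffD1]) (auto simp: poly_map_poly_cnj)

lemma sinv_mult: "sinv (p * q) = sinv p * sinv q"
  by (simp add: sinv_def reflect_poly_mult map_poly_cnj_mult)

lemma sinv_smult: "sinv (Polynomial.smult c p) = Polynomial.smult (cnj c) (sinv p)"
  by (simp add: sinv_def reflect_poly_smult map_poly_cnj_smult)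

lemma sinv_1: "sinv 1 = 1"
  by (simp add: sinv_def)

lemma sinv_prod: "sinv (\<Prod>i\<in>I. f i) = (\<Prod>i\<in>I. sinv (f i))"
  by (induction I rule: infinite_finite_induct) (simp_all add: sinv_1 sinv_mult)


lemma coeff_sinv: "coeff (sinv p) m = (if degree p < m then 0 else cnj (coeff p (degree p - m)))"
  by (simp add: sinv_def coeff_map_poly coeff_reflect_poly)

lemma sinv_lin:
  assumes "\<alpha> \<noteq> 0"
  shows "sinv [:-\<alpha>, 1:] = Polynomial.smult (- cnj \<alpha>) [:- inverse (cnj \<alpha>), 1:]"
proof -
  have L: "sinv [:-\<alpha>, 1:] = [:1, - cnj \<alpha>:]"
  proof (rule poly_eqI)
    fix m :: nat
    show "coeff (sinv [:-\<alpha>, 1:]) m = coeff [:1, - cnj \<alpha>:] m"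
      by (cases m) (simp_all add: coeff_sinv coeff_pCons split: nat.split)
  qed
  have "cnj \<alpha> \<noteq> 0" using assms by simp
  then have R: "Polynomial.smult (- cnj \<alpha>) [:- inverse (cnj \<alpha>), 1:] = [:1, - cnj \<alpha>:]"
    by simp
  show ?thesis unfolding L R ..
qed


lemma sinv_assoc: "N \<ge> 2 \<Longrightarrow> sinv (assoc_poly N a) = assoc_poly N a"
  by (rule poly_eqI) (auto simp: coeff_sinv degree_assoc coeff_assoc assoc_coeff_sym)

definition inva :: "nat \<Rightarrow> complex poly \<Rightarrow> nat \<Rightarrow> real" where
  "inva N p j = (if 2 * j < N then sqrt 2 * Re (coeff p (N - j))
      else if 2 * j = N then Re (coeff p (N - j)) else - sqrt 2 * Im (coeff p (N - j)))"

lemma inva_assoc: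
  assumes N: "N \<ge> 2" and j: "1 \<le> j" "j \<le> N - 1"
  shows "inva N (assoc_poly N a) j = a j"
proof -
  have "N - j \<noteq> N" "N - j \<noteq> 0" "N - j < N" "N - (N - j) = j" using N j by auto
  then have c: "coeff (assoc_poly N a) (N - j) = assoc_coeff N a j"
    using N by (simp add: coeff_assoc)
  show ?thesis unfolding inva_def c assoc_coeff_def by auto
qed

lemma assoc_inva:
  assumes N: "N \<ge> 2" and s: "sinv p = p" and d: "degree p = N"
    and l: "lead_coeff p = 1" and c0: "coeff p 0 = 1"
  shows "assoc_poly N (inva N p) = p"
proof (rule poly_eqI)
  fix m
  have sym: "coeff p k = cnj (coeff p (N - k))" if "k \<le> N" for k
  proof -
    have "coeff p k = coeff (sinv p) k" using s by simp
    also have "\<dots> = cnj (coeff p (N - k))" using that d by (simp add: coeff_sinv)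
    finally show ?thesis .
  qed
  show "coeff (assoc_poly N (inva N p)) m = coeff p m"
  proof (cases "m = N \<or> m = 0 \<or> m > N")
    case True
    then show ?thesis using N l d c0 by (auto simp: coeff_assoc coeff_eq_0)
  next
    case False
    then have m: "0 < m" "m < N" by auto
    define j where "j = N - m"
    have mj: "m = N - j" "N - (N - j) = j" "1 \<le> j" "j \<le> N - 1" using m unfolding j_def by auto
    have sj: "coeff p j = cnj (coeff p m)" using sym[of j] mj by auto
    have r2: "sqrt 2 * sqrt 2 = (2::real)" by simp
    have "assoc_coeff N (inva N p) j = coeff p m"
    proof (cases "2 * j < N")
      case True
      then have "\<not> 2 * (N - j) < N" "2 * (N - j) \<noteq> N" by auto
      then show ?thesis using True mj sj unfolding assoc_coeff_def inva_def
        by (auto simp: complex_eq_iff)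
    next
      case False
      show ?thesis
      proof (cases "2 * j = N")
        case True
        then have "m = j" using mj by auto
        then have "Im (coeff p m) = 0" using sj by (simp add: complex_eq_iff)
        then show ?thesis using True mj unfolding assoc_coeff_def inva_def
          by (auto simp: complex_eq_iff)
      next
        case F2: False
        then have "2 * (N - j) < N" using False mj by auto
        then show ?thesis using False F2 mj sj unfolding assoc_coeff_def inva_def
          by (auto simp: complex_eq_iff)
      qed
    qed
    then show ?thesis using m N mj by (simp add: coeff_assoc)
  qed
qed


lemma disc_zero_iff:
  fixes p :: "complex poly"
  assumes p: "p \<noteq> 0" and l: "lead_coeff p = 1"
  shows "discriminant p = 0 \<longleftrightarrow> (\<exists>z. poly p z = 0 \<and> poly (pderiv p) z = 0)"
proof -
  have "discriminant p = 0 \<longleftrightarrow> resultant p (pderiv p) = 0"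
    unfolding discriminant_def Let_def l by simp
  also have "\<dots> \<longleftrightarrow> degree (gcd p (pderiv p)) \<noteq> 0"
    by (rule div_exp_Lazard_gcd.resultant_0_gcd)
  also have "\<dots> \<longleftrightarrow> (\<exists>z. poly p z = 0 \<and> poly (pderiv p) z = 0)"
  proof
    assume d: "degree (gcd p (pderiv p)) \<noteq> 0"
    then have "\<not> constant (poly (gcd p (pderiv p)))"
      by (simp add: constant_degree)
    then obtain z where z: "poly (gcd p (pderiv p)) z = 0"
      using fundamental_theorem_of_algebra by blast
    have "poly p z = 0"
      using z poly_eq_0_iff_dvd dvd_trans gcd_dvd1 by metis
    moreover have "poly (pderiv p) z = 0"
      using z poly_eq_0_iff_dvd dvd_trans gcd_dvd2 by metis
    ultimately show "\<exists>z. poly p z = 0 \<and> poly (pderiv p) z = 0" by blast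
  next
    assume "\<exists>z. poly p z = 0 \<and> poly (pderiv p) z = 0"
    then obtain z where z: "poly p z = 0" "poly (pderiv p) z = 0" by blast
    then have "[:-z, 1:] dvd gcd p (pderiv p)"
      by (simp add: poly_eq_0_iff_dvd)
    moreover have "gcd p (pderiv p) \<noteq> 0" using p by simp
    ultimately have "degree [:-z, 1:] \<le> degree (gcd p (pderiv p))"
      by (rule dvd_imp_degree_le)
    then show "degree (gcd p (pderiv p)) \<noteq> 0" by simp
  qed
  finally show ?thesis .
qed


lemma poly_assoc: "poly (assoc_poly N a) z = z ^ N + (\<Sum>n = 1..N-1. assoc_coeff N a n * z ^ (N - n)) + 1"
  by (simp add: assoc_poly_def poly_sum poly_monom)

lemma root_reflect:
  assumes N: "N \<ge> 2" and z: "poly (assoc_poly N a) z = 0"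
  shows "z \<noteq> 0" "poly (assoc_poly N a) (inverse (cnj z)) = 0"
proof -
  let ?p = "assoc_poly N a"
  show z0: "z \<noteq> 0" using z poly_assoc_0[OF N, of a] by auto
  have "poly ?p (inverse (cnj z)) = poly (sinv ?p) (inverse (cnj z))"
    using sinv_assoc[OF N] by simp
  also have "\<dots> = cnj (poly (reflect_poly ?p) (inverse z))"
    by (simp add: sinv_def poly_map_poly_cnj)
  also have "\<dots> = 0" using z0 z by (simp add: poly_reflect_poly_nz)
  finally show "poly ?p (inverse (cnj z)) = 0" .
qed

lemma W_alt:
  assumes N: "N \<ge> 2"
  shows "(\<forall>z. poly (assoc_poly N a) z = 0 \<longrightarrow> cmod z = 1) \<longleftrightarrow>
         (\<forall>z. 1 < cmod z \<longrightarrow> poly (assoc_poly N a) z \<noteq> 0)"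
proof safe
  fix z assume "\<forall>z. poly (assoc_poly N a) z = 0 \<longrightarrow> cmod z = 1" "1 < cmod z" "poly (assoc_poly N a) z = 0"
  then show False by auto
next
  fix z assume h: "\<forall>z. 1 < cmod z \<longrightarrow> poly (assoc_poly N a) z \<noteq> 0" and z: "poly (assoc_poly N a) z = 0"
  note r = root_reflect[OF N z]
  have "\<not> 1 < cmod z" using h z by auto
  moreover have "\<not> 1 < cmod (inverse (cnj z))" using h r by auto
  moreover have "cmod (inverse (cnj z)) = inverse (cmod z)" by (simp add: norm_inverse)
  moreover have "0 < cmod z" using r(1) by simp
  ultimately show "cmod z = 1" using one_less_inverse[of "cmod z"] by fastforce
qed

lemma monic_factor:
  fixes p :: "complex poly"
  assumes "lead_coeff p = 1"
  obtains \<rho> where "p = (\<Prod>i<degree p. [:- \<rho> i, 1:])"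
proof -
  obtain \<rho> where h: "Polynomial.smult (lead_coeff p) (\<Prod>i<degree p. [:- \<rho> i, 1:]) = p"
    by (rule complex_poly_decompose')
  then have "(\<Prod>i<degree p. [:- \<rho> i, 1:]) = p" by (simp only: assms smult_1_left)
  then show ?thesis using that[of \<rho>] by (simp only: eq_commute)
qed

lemma poly_prod_lin: "poly (\<Prod>i\<in>I. [:- \<rho> i, 1:]) (z::complex) = (\<Prod>i\<in>I. z - \<rho> i)"
  unfolding poly_prod by (intro prod.cong refl) simp


lemma root_bound:
  fixes p :: "complex poly"
  assumes l: "lead_coeff p = 1" and h: "\<forall>z. 1 < cmod z \<longrightarrow> poly p z \<noteq> 0" and z: "1 < cmod z"
  shows "(cmod z - 1) ^ degree p \<le> cmod (poly p z)"
proof -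
  obtain \<rho> where pr: "p = (\<Prod>i<degree p. [:- \<rho> i, 1:])" using monic_factor[OF l] by blast
  have r: "cmod (\<rho> i) \<le> 1" if "i < degree p" for i
  proof -
    have "poly p (\<rho> i) = poly (\<Prod>i<degree p. [:- \<rho> i, 1:]) (\<rho> i)"
      by (simp only: pr[symmetric])
    also have "\<dots> = (\<Prod>j<degree p. \<rho> i - \<rho> j)" by (rule poly_prod_lin)
    also have "\<dots> = 0" using that by (intro prod_zero) auto
    finally have "poly p (\<rho> i) = 0" .
    then show ?thesis using h by force
  qed
  have "(cmod z - 1) ^ degree p = (\<Prod>i<degree p. cmod z - 1)" by simp
  also have "\<dots> \<le> (\<Prod>i<degree p. cmod (z - \<rho> i))"
  proof (rule prod_mono)
    fix i assume "i \<in> {..<degree p}"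
    then have "cmod (\<rho> i) \<le> 1" using r by auto
    moreover have "cmod z - cmod (\<rho> i) \<le> cmod (z - \<rho> i)" by (rule norm_triangle_ineq2)
    ultimately show "0 \<le> cmod z - 1 \<and> cmod z - 1 \<le> cmod (z - \<rho> i)" using z by auto
  qed
  also have "\<dots> = cmod (\<Prod>i<degree p. z - \<rho> i)" by (simp add: prod_norm)
  also have "\<dots> = cmod (poly (\<Prod>i<degree p. [:- \<rho> i, 1:]) z)" by (simp only: poly_prod_lin)
  also have "\<dots> = cmod (poly p z)" by (simp only: pr[symmetric])
  finally show ?thesis .
qed

definition PW :: "nat \<Rightarrow> (nat \<Rightarrow> 'n::finite) \<Rightarrow> real ^ 'n \<Rightarrow> complex poly" where
  "PW N e w = assoc_poly N (\<lambda>j. w $ e j)"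

lemma cn: "continuous_on S (\<lambda>x::real^'n. complex_of_real (x $ i))"
  by (rule linear_continuous_on, rule bounded_linear_compose[OF bounded_linear_of_real bounded_linear_vec_nth])

lemma cont_assoc_coeff: "continuous_on UNIV (\<lambda>w::real^'n. assoc_coeff N (\<lambda>j. w $ e j) n)"
  apply (cases "2 * n < N"; cases "2 * n = N")
  apply (simp_all add: assoc_coeff_def)
  apply (intro continuous_intros cn; simp)+
  done

lemma cont_poly_PW: "continuous_on UNIV (\<lambda>w. poly (PW N e w) z)"
  unfolding PW_def poly_assoc
  by (intro continuous_intros cont_assoc_coeff)

lemma W_closed:
  assumes N: "N \<ge> 2"
  shows "closed (W_set N e)"
proof -
  have "W_set N e = (\<Inter>z\<in>{z. 1 < cmod z}. {w. (cmod z - 1) ^ N \<le> cmod (poly (PW N e w) z)})"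
  proof safe
    fix w z assume w: "w \<in> W_set N e" and z: "1 < cmod z"
    have h1: "\<forall>z. 1 < cmod z \<longrightarrow> poly (PW N e w) z \<noteq> 0"
      using W_alt[OF N, of "\<lambda>j. w $ e j"] w by (simp add: W_set_def PW_def)
    have l: "lead_coeff (PW N e w) = 1" using lead_assoc[OF N] by (simp add: PW_def)
    have d: "degree (PW N e w) = N" using degree_assoc[OF N] by (simp add: PW_def)
    show "(cmod z - 1) ^ N \<le> cmod (poly (PW N e w) z)"
      using root_bound[OF l h1 z] d by simp
  next
    fix w assume h: "w \<in> (\<Inter>z\<in>{z. 1 < cmod z}. {w. (cmod z - 1) ^ N \<le> cmod (poly (PW N e w) z)})"
    have "poly (PW N e w) z \<noteq> 0" if "1 < cmod z" for z
    proof
      assume "poly (PW N e w) z = 0"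
      moreover have "0 < (cmod z - 1) ^ N" using that by simp
      moreover have "(cmod z - 1) ^ N \<le> cmod (poly (PW N e w) z)" using h that by blast
      ultimately show False by simp
    qed
    then show "w \<in> W_set N e" using W_alt[OF N, of "\<lambda>j. w $ e j"] by (simp add: W_set_def PW_def)
  qed
  moreover have "closed {w. (cmod z - 1) ^ N \<le> cmod (poly (PW N e w) z)}" for z
    by (intro closed_Collect_le continuous_intros cont_poly_PW)
  ultimately show ?thesis by (auto intro!: closed_INT)
qed


definition vecof :: "nat \<Rightarrow> (nat \<Rightarrow> 'n::finite) \<Rightarrow> (nat \<Rightarrow> real) \<Rightarrow> real ^ 'n" where
  "vecof N e a = (\<chi> i. a (inv_into {1..N-1} e i))"

lemma vecof_nth:
  assumes "bij_betw e {1..N-1} (UNIV :: 'n::finite set)" "j \<in> {1..N-1}"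
  shows "vecof N e a $ e j = a j"
  using assms by (simp add: vecof_def bij_betw_def inv_into_f_f)

lemma PW_vecof:
  assumes "bij_betw e {1..N-1} (UNIV :: 'n::finite set)"
  shows "PW N e (vecof N e a) = assoc_poly N a"
  unfolding PW_def by (rule assoc_poly_cong) (use vecof_nth[OF assms] in auto)

lemma vecof_PW:
  assumes N: "N \<ge> 2" and e: "bij_betw e {1..N-1} (UNIV :: 'n::finite set)"
  shows "vecof N e (inva N (PW N e w)) = w"
proof -
  have "inva N (PW N e w) (inv_into {1..N-1} e i) = w $ i" for i
  proof -
    have i: "inv_into {1..N-1} e i \<in> {1..N-1}" "e (inv_into {1..N-1} e i) = i"
      by (rule inv_into_into, use e in \<open>auto simp: bij_betw_def\<close>)
         (rule f_inv_into_f, use e in \<open>auto simp: bij_betw_def\<close>)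
    show ?thesis unfolding PW_def using inva_assoc[OF N, of "inv_into {1..N-1} e i"] i by auto
  qed
  then show ?thesis unfolding vecof_def by (simp add: vec_eq_iff)
qed

lemma tendsto_vecof:
  assumes "\<And>m. ((\<lambda>x. coeff (f x) m) \<longlongrightarrow> coeff p m) F"
  shows "((\<lambda>x. vecof N e (inva N (f x))) \<longlongrightarrow> vecof N e (inva N p)) F"
proof -
  have "((\<lambda>x. inva N (f x) j) \<longlongrightarrow> inva N p j) F" for j
  proof -
    have R: "((\<lambda>x. Re (coeff (f x) (N - j))) \<longlongrightarrow> Re (coeff p (N - j))) F"
      by (rule tendsto_Re[OF assms])
    have I: "((\<lambda>x. Im (coeff (f x) (N - j))) \<longlongrightarrow> Im (coeff p (N - j))) F"
      by (rule tendsto_Im[OF assms])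
    show ?thesis
      unfolding inva_def
      by (cases "2 * j < N"; cases "2 * j = N")
         (simp_all add: tendsto_mult[OF tendsto_const R] tendsto_minus[OF tendsto_mult[OF tendsto_const I]] R)
  qed
  then show ?thesis unfolding vecof_def by (intro tendsto_vec_lambda)
qed


lemma cnj_mult_unit: "cmod \<zeta> = 1 \<Longrightarrow> cnj \<zeta> * \<zeta> = 1"
  using complex_norm_square[of \<zeta>] by (simp add: mult.commute)

lemma cnj_unit2: assumes "cmod \<zeta> = 1" shows "cnj \<zeta> ^ 2 * \<zeta> ^ 2 = 1" "\<zeta> ^ 2 * cnj \<zeta> ^ 2 = 1"
    "cnj \<zeta> ^ 2 * \<zeta> = cnj \<zeta>"
proof -
  have c: "cnj \<zeta> * \<zeta> = 1" by (rule cnj_mult_unit[OF assms])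
  show 1: "cnj \<zeta> ^ 2 * \<zeta> ^ 2 = 1" by (simp add: power_mult_distrib[symmetric] c)
  then show "\<zeta> ^ 2 * cnj \<zeta> ^ 2 = 1" by (simp add: mult.commute)
  have "cnj \<zeta> ^ 2 * \<zeta> = cnj \<zeta> * (cnj \<zeta> * \<zeta>)" by (simp add: power2_eq_square mult.assoc)
  also have "\<dots> = cnj \<zeta>" by (simp add: c)
  finally show "cnj \<zeta> ^ 2 * \<zeta> = cnj \<zeta>" .
qed

definition quad :: "complex \<Rightarrow> real \<Rightarrow> complex poly" where
  "quad \<zeta> s = [:\<zeta>^2, - (2 + complex_of_real s) * \<zeta>, 1:]"

lemma quad0: "quad \<zeta> 0 = [:-\<zeta>, 1:] ^ 2"
  by (simp add: quad_def power2_eq_square algebra_simps)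

lemma degree_quad: "degree (quad \<zeta> s) = 2"
  by (simp add: quad_def)

lemma sinv_quad:
  assumes u: "cmod \<zeta> = 1"
  shows "sinv (quad \<zeta> s) = Polynomial.smult (cnj \<zeta> ^ 2) (quad \<zeta> s)"
proof (rule poly_eqI)
  fix m :: nat
  note c = cnj_unit2[OF u]
  have "m = 0 \<or> m = 1 \<or> m = 2 \<or> m > 2" by auto
  then show "coeff (sinv (quad \<zeta> s)) m = coeff (Polynomial.smult (cnj \<zeta> ^ 2) (quad \<zeta> s)) m"
  proof (elim disjE)
    assume "m = 0" then show ?thesis
      by (simp add: coeff_sinv degree_quad quad_def c)
  next
    assume "m = 1" then show ?thesis
    proof -
      have F: "cnj \<zeta> ^ 2 * (- (2 + complex_of_real s) * \<zeta>) = - (2 + complex_of_real s) * (cnj \<zeta> ^ 2 * \<zeta>)"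
        by (simp add: algebra_simps)
      have L: "coeff (sinv (quad \<zeta> s)) 1 = - (2 + complex_of_real s) * cnj \<zeta>"
        by (simp add: coeff_sinv degree_quad quad_def)
      have R: "coeff (Polynomial.smult (cnj \<zeta> ^ 2) (quad \<zeta> s)) 1 = cnj \<zeta> ^ 2 * (- (2 + complex_of_real s) * \<zeta>)"
        by (simp add: quad_def)
      show ?thesis unfolding \<open>m = 1\<close> by (simp only: L R F c(3))
    qed
  qed (auto simp: coeff_sinv degree_quad quad_def coeff_eq_0 numeral_2_eq_2)
qed

lemma not_interior:
  assumes N: "N \<ge> 2" and e: "bij_betw e {1..N-1} (UNIV :: 'n::finite set)"
    and w: "w \<in> W_set N e"
    and z1: "poly (PW N e w) \<zeta> = 0" and z2: "poly (pderiv (PW N e w)) \<zeta> = 0"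
  shows "w \<notin> interior (W_set N e)"
proof
  assume wi: "w \<in> interior (W_set N e)"
  define p where "p = PW N e w"
  have pnz: "p \<noteq> 0" using assoc_nz[OF N] by (simp add: p_def PW_def)
  have dp: "degree p = N" using degree_assoc[OF N] by (simp add: p_def PW_def)
  have lp: "lead_coeff p = 1" using lead_assoc[OF N] by (simp add: p_def PW_def)
  have sp: "sinv p = p" using sinv_assoc[OF N] by (simp add: p_def PW_def)
  have p0: "poly p 0 = 1" using poly_assoc_0[OF N] by (simp add: p_def PW_def)
  have u: "cmod \<zeta> = 1" using w z1 unfolding W_set_def PW_def by auto
  have c: "cnj \<zeta> * \<zeta> = 1" using cnj_mult_unit[OF u] .
  have "pderiv p \<noteq> 0" using dp N by (auto simp: pderiv_eq_0_iff)
  then have "order \<zeta> (pderiv p) \<noteq> 0" using z2 unfolding p_def by (simp add: order_root)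
  then have "2 \<le> order \<zeta> p" using order_pderiv[of p \<zeta>] pnz z1 unfolding p_def by auto
  then have "[:-\<zeta>, 1:] ^ 2 dvd p" using order_divides[of \<zeta> 2 p] by blast
  then obtain q where pq: "p = quad \<zeta> 0 * q" by (auto simp: quad0 elim!: dvdE)
  have qnz: "q \<noteq> 0" using pq pnz by auto
  have q0: "quad \<zeta> 0 \<noteq> 0" using degree_quad[of \<zeta> 0] by auto
  have "quad \<zeta> 0 * Polynomial.smult (cnj \<zeta> ^ 2) (sinv q) = quad \<zeta> 0 * q"
    using sp unfolding pq sinv_mult sinv_quad[OF u] by (simp add: mult_ac)
  then have "quad \<zeta> 0 * Polynomial.smult (cnj \<zeta> ^ 2) (sinv q) = quad \<zeta> 0 * q"
    by (simp only: mult_smult_right)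
  then have "Polynomial.smult (cnj \<zeta> ^ 2) (sinv q) = q" using q0 mult_left_cancel by blast
  then have "Polynomial.smult (\<zeta> ^ 2) (Polynomial.smult (cnj \<zeta> ^ 2) (sinv q)) = Polynomial.smult (\<zeta> ^ 2) q"
    by simp
  then have sq: "sinv q = Polynomial.smult (\<zeta> ^ 2) q"
    by (simp add: cnj_unit2[OF u])
  define Q where "Q s = quad \<zeta> s * q" for s
  define D where "D = [:0, \<zeta>:] * q"
  have qs: "quad \<zeta> s = quad \<zeta> 0 - Polynomial.smult (complex_of_real s) [:0, \<zeta>:]" for s
    by (simp add: quad_def algebra_simps)
  have QD: "Q s = p - Polynomial.smult (complex_of_real s) D" for s
    unfolding Q_def D_def pq by (subst qs) (simp add: algebra_simps)
  have dq: "degree (Q s) = N" for s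
  proof -
    have "degree p = degree (quad \<zeta> 0) + degree q" using pq q0 qnz by (simp add: degree_mult_eq)
    moreover have "quad \<zeta> s \<noteq> 0" using degree_quad[of \<zeta> s] by auto
    ultimately show ?thesis unfolding Q_def using dp qnz
      by (subst degree_mult_eq) (auto simp: degree_quad)
  qed
  have lq: "lead_coeff (Q s) = 1" for s
  proof -
    have "lead_coeff p = lead_coeff (quad \<zeta> 0) * lead_coeff q" using pq by (simp add: lead_coeff_mult)
    then have "lead_coeff q = 1" using lp by (simp add: quad_def)
    moreover have "lead_coeff (quad \<zeta> s) = 1" by (simp add: quad_def)
    ultimately show ?thesis unfolding Q_def lead_coeff_mult by simp
  qed
  have cq: "coeff (Q s) 0 = 1" for s
  proof -
    have "coeff (Q s) 0 = coeff (Q 0) 0" unfolding Q_def by (simp add: quad_def coeff_mult)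
    also have "\<dots> = poly p 0" unfolding QD by (simp add: poly_0_coeff_0)
    finally show ?thesis using p0 by simp
  qed
  have sQ: "sinv (Q s) = Q s" for s
    unfolding Q_def sinv_mult sinv_quad[OF u] sq
    by (simp add: cnj_unit2[OF u])
  have AQ: "assoc_poly N (inva N (Q s)) = Q s" for s
    by (rule assoc_inva[OF N sQ dq lq cq])
  define sr where "sr r = r + 1 / r - 2" for r :: real
  define v where "v r = vecof N e (inva N (Q (sr r)))" for r
  have notin: "v r \<notin> W_set N e" if r: "r > 1" for r
  proof
    assume vr: "v r \<in> W_set N e"
    have eq: "assoc_poly N (\<lambda>j. v r $ e j) = Q (sr r)"
      using PW_vecof[OF e, of "inva N (Q (sr r))"] AQ[of "sr r"] unfolding v_def PW_def by simp
    have h: "\<forall>z. poly (Q (sr r)) z = 0 \<longrightarrow> cmod z = 1"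
      using vr eq by (simp add: W_set_def)
    have g: "poly (quad \<zeta> t) (x * \<zeta>) = \<zeta>^2 * (1 - (2 + complex_of_real t) * x + x^2)" for t x
      by (simp add: quad_def algebra_simps power2_eq_square)
    have rn: "r \<noteq> 0" using r by simp
    have "(2 + sr r) * r = r * r + (1 / r) * r" by (simp add: sr_def algebra_simps)
    also have "\<dots> = r^2 + 1" using rn by (simp add: power2_eq_square)
    finally have r0: "1 - (2 + sr r) * r + r^2 = 0" by simp
    have ce: "1 - (2 + complex_of_real (sr r)) * complex_of_real r + (complex_of_real r)^2
          = complex_of_real (1 - (2 + sr r) * r + r^2)" by simp
    have "poly (quad \<zeta> (sr r)) (complex_of_real r * \<zeta>) = \<zeta>^2 * complex_of_real (1 - (2 + sr r) * r + r^2)"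
      unfolding ce[symmetric] by (rule g)
    then have "poly (quad \<zeta> (sr r)) (complex_of_real r * \<zeta>) = 0" unfolding r0 by simp
    then have "poly (Q (sr r)) (complex_of_real r * \<zeta>) = 0" unfolding Q_def by simp
    then have "cmod (complex_of_real r * \<zeta>) = 1" using h by blast
    then show False using r u by (simp add: norm_mult)
  qed
  have v1: "v 1 = w" unfolding v_def sr_def QD p_def using vecof_PW[OF N e] by simp
  have srt: "(sr \<longlongrightarrow> 0) (at_right 1)"
  proof -
    have "(sr \<longlongrightarrow> sr 1) (at_right 1)" unfolding sr_def by (intro tendsto_intros) auto
    then show ?thesis by (simp add: sr_def)
  qed
  have "(v \<longlongrightarrow> v 1) (at_right 1)"
    unfolding v_def
  proof (rule tendsto_vecof)
    fix m
    show "((\<lambda>x. coeff (Q (sr x)) m) \<longlongrightarrow> coeff (Q (sr 1)) m) (at_right 1)"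
    proof -
      have c0: "((\<lambda>x. complex_of_real (sr x)) \<longlongrightarrow> 0) (at_right 1)"
        using tendsto_of_real[OF srt] by simp
      have "((\<lambda>x. coeff p m - complex_of_real (sr x) * coeff D m) \<longlongrightarrow> coeff p m - 0 * coeff D m) (at_right 1)"
        by (rule tendsto_diff[OF tendsto_const tendsto_mult[OF c0 tendsto_const]])
      moreover have "sr 1 = 0" by (simp add: sr_def)
      ultimately show ?thesis unfolding QD by simp
    qed
  qed
  then have "eventually (\<lambda>r. v r \<in> interior (W_set N e)) (at_right 1)"
    using wi v1 by (intro topological_tendstoD) auto
  moreover have "eventually (\<lambda>r. r > (1::real)) (at_right 1)" by (rule eventually_at_right_less)
  ultimately have "eventually (\<lambda>r. False) (at_right (1::real))"
    by eventually_elim (use notin interior_subset in blast)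
  then show False by (simp add: trivial_limit_at_right_real)
qed


definition Hf :: "nat \<Rightarrow> complex poly \<Rightarrow> complex \<Rightarrow> complex" where
  "Hf N p z = exp (- (\<i> * of_nat N * z / 2)) * poly p (exp (\<i> * z))"

definition Hd :: "nat \<Rightarrow> complex poly \<Rightarrow> complex \<Rightarrow> complex" where
  "Hd N p z = exp (- (\<i> * of_nat N * z / 2)) * (- (\<i> * of_nat N / 2) * poly p (exp (\<i> * z))
     + poly (pderiv p) (exp (\<i> * z)) * (\<i> * exp (\<i> * z)))"

lemma Hf_deriv: "(Hf N p has_field_derivative Hd N p z) (at z)"
proof -
  have e1: "((\<lambda>z. exp (- (\<i> * of_nat N * z / 2))) has_field_derivative
            exp (- (\<i> * of_nat N * z / 2)) * (- (\<i> * of_nat N / 2))) (at z)"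
    by (auto intro!: derivative_eq_intros)
  have e2: "((\<lambda>z. exp (\<i> * z)) has_field_derivative exp (\<i> * z) * \<i>) (at z)"
    by (auto intro!: derivative_eq_intros)
  have e3: "((\<lambda>z. poly p (exp (\<i> * z))) has_field_derivative
            poly (pderiv p) (exp (\<i> * z)) * (exp (\<i> * z) * \<i>)) (at z)"
    by (rule DERIV_chain2[OF poly_DERIV e2])
  have "((\<lambda>z. exp (- (\<i> * of_nat N * z / 2)) * poly p (exp (\<i> * z))) has_field_derivative
     exp (- (\<i> * of_nat N * z / 2)) * (- (\<i> * of_nat N / 2)) * poly p (exp (\<i> * z)) +
     poly (pderiv p) (exp (\<i> * z)) * (exp (\<i> * z) * \<i>) * exp (- (\<i> * of_nat N * z / 2))) (at z)"
    by (rule DERIV_mult[OF e1 e3])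
  then show ?thesis unfolding Hf_def[abs_def] Hd_def by (simp add: algebra_simps)
qed

lemma Re_Hf_deriv:
  "((\<lambda>t. Re (Hf N p (of_real t))) has_real_derivative Re (Hd N p (of_real t))) (at t)"
  unfolding has_real_derivative_iff_has_vector_derivative
  by (rule bounded_linear.has_vector_derivative[OF bounded_linear_Re
        has_vector_derivative_real_field[OF Hf_deriv]])

lemma Im_Hf_deriv:
  "((\<lambda>t. Im (Hf N p (of_real t))) has_real_derivative Im (Hd N p (of_real t))) (at t)"
  unfolding has_real_derivative_iff_has_vector_derivative
  by (rule bounded_linear.has_vector_derivative[OF bounded_linear_Im
        has_vector_derivative_real_field[OF Hf_deriv]])

lemma Hf_real:
  assumes s: "sinv p = p" and d: "degree p = N"
  shows "Im (Hf N p (of_real t)) = 0"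
proof -
  define A where "A = exp (\<i> * complex_of_real t)"
  define u where "u = exp (\<i> * of_nat N * complex_of_real t / 2)"
  define P where "P = poly p A"
  have A0: "A \<noteq> 0" unfolding A_def by simp
  have cA: "cnj A = inverse A" unfolding A_def by (simp add: exp_cnj exp_minus)
  have cu: "cnj u = inverse u" unfolding u_def by (simp add: exp_cnj exp_minus)
  have u2: "u * u = A ^ N"
  proof -
    have "u * u = exp (of_nat N * (\<i> * complex_of_real t))"
      unfolding u_def by (simp add: exp_add[symmetric] algebra_simps)
    also have "\<dots> = A ^ N" unfolding A_def by (rule exp_of_nat_mult)
    finally show ?thesis .
  qed
  have "P = poly (sinv p) A" using s by (simp add: P_def)
  also have "\<dots> = cnj (poly (reflect_poly p) (cnj A))" by (simp add: sinv_def poly_map_poly_cnj)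
  also have "\<dots> = cnj (cnj A ^ N * P)"
    using A0 by (simp add: poly_reflect_poly_nz d cA P_def)
  also have "\<dots> = A ^ N * cnj P" by simp
  finally have PP: "P = A ^ N * cnj P" .
  have H: "Hf N p (of_real t) = inverse u * P"
    unfolding Hf_def u_def P_def A_def by (simp add: exp_minus)
  have "cnj (Hf N p (of_real t)) = u * cnj P" unfolding H using cu by simp
  also have "\<dots> = inverse u * (u * u) * cnj P" by (simp add: u_def)
  also have "\<dots> = inverse u * P" using PP u2 by (simp add: mult.assoc)
  finally have "cnj (Hf N p (of_real t)) = Hf N p (of_real t)" unfolding H .
  then show ?thesis by (metis Reals_cnj_iff complex_is_Real_iff)
qed

lemma Hd_real:
  assumes s: "sinv p = p" and d: "degree p = N"
  shows "Im (Hd N p (of_real t)) = 0"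
proof -
  have "(\<lambda>t. Im (Hf N p (of_real t))) = (\<lambda>t. 0)" using Hf_real[OF s d] by auto
  then have "((\<lambda>t. Im (Hf N p (of_real t))) has_real_derivative 0) (at t)" by simp
  from DERIV_unique[OF Im_Hf_deriv this] show ?thesis .
qed

lemma signchange:
  assumes f: "(f has_real_derivative d) (at x)" and d: "d \<noteq> 0" and f0: "f x = 0"
  shows "\<exists>\<delta>>0. \<forall>s. 0 < s \<longrightarrow> s < \<delta> \<longrightarrow> f (x - s) * f (x + s) < 0"
proof (cases "d > 0")
  case True
  obtain d1 where d1: "d1 > 0" "\<forall>h>0. h < d1 \<longrightarrow> f x < f (x + h)" using DERIV_pos_inc_right[OF f True] by blast
  obtain d2 where d2: "d2 > 0" "\<forall>h>0. h < d2 \<longrightarrow> f (x - h) < f x" using DERIV_pos_inc_left[OF f True] by blast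
  show ?thesis
    by (rule exI[of _ "min d1 d2"]) (use d1 d2 f0 in \<open>auto intro: mult_neg_pos\<close>)
next
  case False
  then have dn: "d < 0" using d by auto
  obtain d1 where d1: "d1 > 0" "\<forall>h>0. h < d1 \<longrightarrow> f (x + h) < f x" using DERIV_neg_dec_right[OF f dn] by blast
  obtain d2 where d2: "d2 > 0" "\<forall>h>0. h < d2 \<longrightarrow> f x < f (x - h)" using DERIV_neg_dec_left[OF f dn] by blast
  show ?thesis
    by (rule exI[of _ "min d1 d2"]) (use d1 d2 f0 in \<open>auto intro: mult_pos_neg\<close>)
qed

lemma exp_dist: "cmod (exp (\<i> * complex_of_real a) - exp (\<i> * complex_of_real b)) \<le> \<bar>a - b\<bar>"
proof -
  have "exp (\<i> * complex_of_real a) - exp (\<i> * complex_of_real b)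
        = exp (\<i> * complex_of_real b) * (exp (\<i> * complex_of_real (a - b)) - 1)"
    by (simp add: algebra_simps exp_add[symmetric])
  then have "cmod (exp (\<i> * complex_of_real a) - exp (\<i> * complex_of_real b))
        = cmod (exp (\<i> * complex_of_real (a - b)) - 1)" by (simp add: norm_mult)
  also have "\<dots> = 2 * \<bar>sin ((a - b) / 2)\<bar>" by (rule dist_exp_i_1)
  also have "\<dots> \<le> 2 * \<bar>(a - b) / 2\<bar>" using abs_sin_x_le_abs_x[of "(a - b) / 2"] by linarith
  finally show ?thesis by simp
qed


lemma PW_facts:
  assumes N: "N \<ge> 2"
  shows "sinv (PW N e w) = PW N e w" "degree (PW N e w) = N" "PW N e w \<noteq> 0"
    "lead_coeff (PW N e w) = 1"
  unfolding PW_def using sinv_assoc[OF N] degree_assoc[OF N] assoc_nz[OF N] lead_assoc[OF N] by auto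

lemma cont_G: "continuous_on UNIV (\<lambda>w. Re (Hf N (PW N e w) (complex_of_real t)))"
  unfolding Hf_def by (intro continuous_intros cont_poly_PW)

lemma interior_simple:
  assumes N: "N \<ge> 2" and w: "w \<in> W_set N e"
    and nc: "\<forall>z. poly (PW N e w) z = 0 \<longrightarrow> poly (pderiv (PW N e w)) z \<noteq> 0"
  shows "w \<in> interior (W_set N e)"
proof -
  define p where "p = PW N e w"
  define G where "G w' t = Re (Hf N (PW N e w') (complex_of_real t))" for w' t
  note F = PW_facts[OF N, of e w]
  define Z where "Z = {z. poly p z = 0}"
  have pnz: "p \<noteq> 0" using F unfolding p_def by auto
  have finZ: "finite Z" unfolding Z_def using poly_roots_finite[OF pnz] .
  have cardZ: "card Z = N"
  proof -
    have "rsquarefree p" unfolding rsquarefree_roots using nc unfolding p_def by auto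
    from complex_poly_decompose_rsquarefree[OF this]
    have pe: "(\<Prod>z\<in>Z. [:- z, 1:]) = p" using F unfolding p_def Z_def by simp
    have "degree (\<Prod>z\<in>Z. [:- z, 1:]) = (\<Sum>z\<in>Z. degree [:- z, (1::complex):])"
      by (rule degree_prod_sum_eq) simp
    then have "degree p = card Z" unfolding pe by simp
    then show ?thesis using F unfolding p_def by simp
  qed
  have Zu: "cmod \<zeta> = 1" if "\<zeta> \<in> Z" for \<zeta>
    using w that unfolding W_set_def Z_def p_def PW_def by auto
  define th where "th \<zeta> = Arg \<zeta>" for \<zeta>
  have eth: "exp (\<i> * complex_of_real (th \<zeta>)) = \<zeta>" if "\<zeta> \<in> Z" for \<zeta>
    using Zu[OF that] complex_norm_eq_1_exp_eq unfolding th_def by blast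
  have sc: "\<exists>d>0. \<forall>s. 0 < s \<longrightarrow> s < d \<longrightarrow> G w (th \<zeta> - s) * G w (th \<zeta> + s) < 0"
    if z: "\<zeta> \<in> Z" for \<zeta>
  proof -
    have z0: "\<zeta> \<noteq> 0" using Zu[OF z] by auto
    have pz: "poly p \<zeta> = 0" using z unfolding Z_def by simp
    have dz: "poly (pderiv p) \<zeta> \<noteq> 0" using nc pz unfolding p_def by auto
    have G0: "G w (th \<zeta>) = 0" unfolding G_def Hf_def p_def[symmetric]
      using eth[OF z] pz by (simp add: mult.assoc)
    have "Hd N p (complex_of_real (th \<zeta>)) = exp (- (\<i> * of_nat N * complex_of_real (th \<zeta>) / 2)) *
            (poly (pderiv p) \<zeta> * (\<i> * \<zeta>))"
      unfolding Hd_def using eth[OF z] pz by (simp add: mult.assoc)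
    then have Hd0: "Hd N p (complex_of_real (th \<zeta>)) \<noteq> 0" using dz z0 by simp
    have "Im (Hd N p (complex_of_real (th \<zeta>))) = 0"
      using Hd_real[of p N] F unfolding p_def by simp
    then have "Re (Hd N p (complex_of_real (th \<zeta>))) \<noteq> 0" using Hd0 complex_eq_iff[of _ 0] by auto
    moreover have "((G w) has_real_derivative Re (Hd N p (complex_of_real (th \<zeta>)))) (at (th \<zeta>))"
      unfolding G_def[abs_def] p_def by (rule Re_Hf_deriv)
    ultimately show ?thesis using signchange[of "G w" _ "th \<zeta>"] G0 by blast
  qed
  then obtain d0 where d0: "\<forall>\<zeta>\<in>Z. d0 \<zeta> > 0 \<and> (\<forall>s. 0 < s \<longrightarrow> s < d0 \<zeta> \<longrightarrow> G w (th \<zeta> - s) * G w (th \<zeta> + s) < 0)"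
    by metis
  have ev1: "\<forall>\<^sub>F d in at_right (0::real). \<forall>\<zeta>\<in>Z. d < d0 \<zeta>"
  proof (rule eventually_ball_finite[OF finZ], safe)
    fix \<zeta> assume "\<zeta> \<in> Z"
    then show "\<forall>\<^sub>F d in at_right 0. d < d0 \<zeta>" using d0
      by (intro eventually_at_rightI[of 0 "d0 \<zeta>"]) auto
  qed
  have ev2: "\<forall>\<^sub>F d in at_right (0::real). \<forall>\<zeta>\<in>Z. \<forall>\<zeta>'\<in>Z. \<zeta> \<noteq> \<zeta>' \<longrightarrow> 2 * d < cmod (\<zeta> - \<zeta>')"
  proof (rule eventually_ball_finite[OF finZ], safe)
    fix \<zeta> assume "\<zeta> \<in> Z"
    show "\<forall>\<^sub>F d in at_right 0. \<forall>\<zeta>'\<in>Z. \<zeta> \<noteq> \<zeta>' \<longrightarrow> 2 * d < cmod (\<zeta> - \<zeta>')"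
    proof (rule eventually_ball_finite[OF finZ], safe)
      fix \<zeta>' assume "\<zeta>' \<in> Z"
      have "\<forall>\<^sub>F d in at_right 0. 2 * d < cmod (\<zeta> - \<zeta>') \<or> \<zeta> = \<zeta>'"
      proof (cases "\<zeta> = \<zeta>'")
        case False
        then have "0 < cmod (\<zeta> - \<zeta>') / 2" by simp
        then show ?thesis by (intro eventually_at_rightI[of 0 "cmod (\<zeta> - \<zeta>') / 2"]) auto
      qed simp
      then show "\<forall>\<^sub>F d in at_right 0. \<zeta> \<noteq> \<zeta>' \<longrightarrow> 2 * d < cmod (\<zeta> - \<zeta>')"
        by eventually_elim auto
    qed
  qed
  have "\<forall>\<^sub>F d in at_right (0::real). 0 < d \<and> (\<forall>\<zeta>\<in>Z. d < d0 \<zeta>) \<and>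
          (\<forall>\<zeta>\<in>Z. \<forall>\<zeta>'\<in>Z. \<zeta> \<noteq> \<zeta>' \<longrightarrow> 2 * d < cmod (\<zeta> - \<zeta>'))"
    using ev1 ev2 eventually_at_right_less[of "0::real"] by eventually_elim auto
  then obtain \<delta> where dl: "0 < \<delta>" "\<forall>\<zeta>\<in>Z. \<delta> < d0 \<zeta>"
      "\<forall>\<zeta>\<in>Z. \<forall>\<zeta>'\<in>Z. \<zeta> \<noteq> \<zeta>' \<longrightarrow> 2 * \<delta> < cmod (\<zeta> - \<zeta>')"
    using eventually_happens'[OF trivial_limit_at_right_real] by blast
  have neg: "G w (th \<zeta> - \<delta>) * G w (th \<zeta> + \<delta>) < 0" if "\<zeta> \<in> Z" for \<zeta>
    using d0 dl that by blast
  define U where "U = (\<Inter>\<zeta>\<in>Z. {w'. G w' (th \<zeta> - \<delta>) * G w' (th \<zeta> + \<delta>) < 0})"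
  have oU: "open U" unfolding U_def G_def
    by (intro open_INT finZ ballI open_Collect_less continuous_intros cont_G)
  have wU: "w \<in> U" unfolding U_def using neg by auto
  have UW: "U \<subseteq> W_set N e"
  proof
    fix w' assume w': "w' \<in> U"
    let ?q = "PW N e w'"
    have Fq: "sinv ?q = ?q" "degree ?q = N" "?q \<noteq> 0" using PW_facts[OF N, of e w'] by auto
    have ex: "\<exists>z. poly ?q z = 0 \<and> cmod z = 1 \<and> cmod (z - \<zeta>) \<le> \<delta>" if z: "\<zeta> \<in> Z" for \<zeta>
    proof -
      let ?a = "th \<zeta> - \<delta>" and ?b = "th \<zeta> + \<delta>"
      have ng: "G w' ?a * G w' ?b < 0" using w' z unfolding U_def by auto
      have cont: "continuous_on {?a..?b} (G w')"
        unfolding G_def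
        by (rule continuous_at_imp_continuous_on, rule ballI, rule DERIV_isCont, rule Re_Hf_deriv)
      have ab: "?a \<le> ?b" using dl by simp
      obtain t where t: "?a \<le> t" "t \<le> ?b" "G w' t = 0"
      proof (cases "G w' ?a < 0")
        case True
        then have "0 < G w' ?b" using ng by (simp add: mult_less_0_iff)
        then show ?thesis using IVT'[of "G w'" ?a 0 ?b] True ab cont that by force
      next
        case False
        then have "G w' ?a > 0" "G w' ?b < 0" using ng by (auto simp: mult_less_0_iff)
        then show ?thesis using IVT2'[of "G w'" ?b 0 ?a] ab cont that by force
      qed
      have "Im (Hf N ?q (complex_of_real t)) = 0" using Hf_real[OF Fq(1) Fq(2)] .
      then have "Hf N ?q (complex_of_real t) = 0" using t(3) unfolding G_def by (simp add: complex_eq_iff)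
      then have root: "poly ?q (exp (\<i> * complex_of_real t)) = 0" unfolding Hf_def by simp
      have "cmod (exp (\<i> * complex_of_real t) - \<zeta>) \<le> \<bar>t - th \<zeta>\<bar>"
        using exp_dist[of t "th \<zeta>"] eth[OF z] by simp
      also have "\<dots> \<le> \<delta>" using t by auto
      finally show ?thesis using root by (intro exI[of _ "exp (\<i> * complex_of_real t)"]) simp
    qed
    then obtain f where f: "\<forall>\<zeta>\<in>Z. poly ?q (f \<zeta>) = 0 \<and> cmod (f \<zeta>) = 1 \<and> cmod (f \<zeta> - \<zeta>) \<le> \<delta>"
      by metis
    have inj: "inj_on f Z"
    proof (rule inj_onI, rule ccontr)
      fix x y assume xy: "x \<in> Z" "y \<in> Z" "f x = f y" "x \<noteq> y"
      have "cmod (x - y) = cmod ((x - f x) + (f y - y))" using xy by simp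
      also have "\<dots> \<le> cmod (x - f x) + cmod (f y - y)" by (rule norm_triangle_ineq)
      also have "\<dots> \<le> 2 * \<delta>"
      proof -
        have h1: "cmod (f x - x) \<le> \<delta>" using f xy(1) by blast
        have h2: "cmod (f y - y) \<le> \<delta>" using f xy(2) by blast
        have "cmod (x - f x) = cmod (f x - x)" by (rule norm_minus_commute)
        then show ?thesis using h1 h2 by linarith
      qed
      finally show False using dl(3) xy by fastforce
    qed
    define Z' where "Z' = {z. poly ?q z = 0}"
    have finZ': "finite Z'" unfolding Z'_def using poly_roots_finite[OF Fq(3)] .
    have cZ': "card Z' \<le> N" unfolding Z'_def using card_poly_roots_bound[OF Fq(3)] Fq(2) by simp
    have sub: "f ` Z \<subseteq> Z'" unfolding Z'_def using f by auto
    have cfZ: "card (f ` Z) = N" using card_image[OF inj] cardZ by simp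
    have "card (f ` Z) = card Z'" using card_mono[OF finZ' sub] cfZ cZ' by simp
    then have eqZ: "f ` Z = Z'" using card_subset_eq[OF finZ' sub] by simp
    show "w' \<in> W_set N e"
      unfolding W_set_def
    proof safe
      fix z assume "poly (assoc_poly N (\<lambda>j. w' $ e j)) z = 0"
      then have "z \<in> Z'" unfolding Z'_def PW_def by simp
      then obtain \<zeta> where "\<zeta> \<in> Z" "z = f \<zeta>" using eqZ by auto
      then show "cmod z = 1" using f by auto
    qed
  qed
  show ?thesis by (rule interiorI[OF oU wU UW])
qed


lemma coeff_lin_mult: "coeff ([:c::complex, 1:] * q) n = c * coeff q n + (case n of 0 \<Rightarrow> 0 | Suc m \<Rightarrow> coeff q m)"
  by (simp add: mult_pCons_left coeff_pCons split: nat.split)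

lemma prod_smult: "(\<Prod>i\<in>I. Polynomial.smult (c i) (P i)) = Polynomial.smult (\<Prod>i\<in>I. c i) (\<Prod>i\<in>I. P i :: complex poly)"
  by (induction I rule: infinite_finite_induct) (simp_all add: mult_smult_left mult_smult_right mult.commute)

lemma cont_coeff_prod:
  fixes a :: "'i \<Rightarrow> 'b::topological_space \<Rightarrow> complex"
  assumes "finite I" "\<And>i. i \<in> I \<Longrightarrow> continuous_on S (a i)"
  shows "continuous_on S (\<lambda>t. coeff (\<Prod>i\<in>I. [:- a i t, 1:]) n)"
  using assms
proof (induction I arbitrary: n rule: finite_induct)
  case empty
  show ?case by (simp add: continuous_on_const)
next
  case (insert x F)
  have ca: "continuous_on S (a x)" using insert by auto
  have IH: "continuous_on S (\<lambda>t. coeff (\<Prod>i\<in>F. [:- a i t, 1:]) m)" for m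
    using insert by auto
  have eq: "coeff (\<Prod>i\<in>insert x F. [:- a i t, 1:]) n =
      - a x t * coeff (\<Prod>i\<in>F. [:- a i t, 1:]) n +
      (case n of 0 \<Rightarrow> 0 | Suc m \<Rightarrow> coeff (\<Prod>i\<in>F. [:- a i t, 1:]) m)" for t n
    by (simp only: prod.insert[OF insert(1,2)] coeff_lin_mult)
  show ?case
  proof (cases n)
    case 0
    show ?thesis unfolding eq 0 nat.case by (intro continuous_intros ca IH)
  next
    case (Suc m)
    show ?thesis unfolding eq Suc nat.case by (intro continuous_intros ca IH)
  qed
qed

lemma cont_vecof:
  assumes "\<And>m. continuous_on S (\<lambda>t. coeff (f t) m)"
  shows "continuous_on S (\<lambda>t. vecof N e (inva N (f t)))"
  unfolding continuous_on_def
proof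
  fix x assume "x \<in> S"
  then show "((\<lambda>t. vecof N e (inva N (f t))) \<longlongrightarrow> vecof N e (inva N (f x))) (at x within S)"
    using assms unfolding continuous_on_def by (intro tendsto_vecof) auto
qed

lemma Q_facts:
  fixes \<alpha> :: "nat \<Rightarrow> complex"
  assumes N: "N \<ge> 2" and u: "\<And>i. i < N \<Longrightarrow> cmod (\<alpha> i) = 1" and pr: "(\<Prod>i<N. - \<alpha> i) = 1"
  shows "assoc_poly N (inva N (\<Prod>i<N. [:- \<alpha> i, 1:])) = (\<Prod>i<N. [:- \<alpha> i, 1:])"
    "\<And>z. poly (\<Prod>i<N. [:- \<alpha> i, 1:]) z = 0 \<Longrightarrow> cmod z = 1"
proof -
  define Q where "Q = (\<Prod>i<N. [:- \<alpha> i, 1:])"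
  have dQ: "degree Q = N"
  proof -
    have "degree Q = (\<Sum>i<N. degree [:- \<alpha> i, 1:])" unfolding Q_def
      by (rule degree_prod_sum_eq) simp
    then show ?thesis by simp
  qed
  have lQ: "lead_coeff Q = 1" unfolding Q_def lead_coeff_prod by simp
  have c0: "coeff Q 0 = 1"
  proof -
    have "coeff Q 0 = poly Q 0" by (simp add: poly_0_coeff_0)
    also have "\<dots> = (\<Prod>i<N. - \<alpha> i)" unfolding Q_def poly_prod_lin by simp
    finally show ?thesis using pr by simp
  qed
  have inv: "inverse (cnj (\<alpha> i)) = \<alpha> i" if "i < N" for i
    using cnj_mult_unit[OF u[OF that]] by (rule inverse_unique)
  have "sinv Q = (\<Prod>i<N. sinv [:- \<alpha> i, 1:])" unfolding Q_def by (rule sinv_prod)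
  also have "\<dots> = (\<Prod>i<N. Polynomial.smult (- cnj (\<alpha> i)) [:- \<alpha> i, 1:])"
  proof (rule prod.cong[OF refl])
    fix i assume i: "i \<in> {..<N}"
    then have "\<alpha> i \<noteq> 0" using u[of i] by auto
    then show "sinv [:- \<alpha> i, 1:] = Polynomial.smult (- cnj (\<alpha> i)) [:- \<alpha> i, 1:]"
      using sinv_lin[of "\<alpha> i"] inv[of i] i cnj_mult_unit[OF u[of i]] by simp
  qed
  also have "\<dots> = Polynomial.smult (\<Prod>i<N. - cnj (\<alpha> i)) Q" unfolding Q_def by (rule prod_smult)
  also have "(\<Prod>i<N. - cnj (\<alpha> i)) = cnj (\<Prod>i<N. - \<alpha> i)" by (simp add: cnj_prod)
  also have "\<dots> = 1" using pr by simp
  finally have sQ: "sinv Q = Q" by simp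
  show "assoc_poly N (inva N (\<Prod>i<N. [:- \<alpha> i, 1:])) = (\<Prod>i<N. [:- \<alpha> i, 1:])"
    using assoc_inva[OF N sQ dQ lQ c0] unfolding Q_def .
  fix z assume "poly (\<Prod>i<N. [:- \<alpha> i, 1:]) z = 0"
  then have "(\<Prod>i<N. z - \<alpha> i) = 0" unfolding poly_prod_lin .
  then obtain i where "i < N" "z = \<alpha> i" by auto
  then show "cmod z = 1" using u by auto
qed

lemma exp_shift: "exp (\<i> * complex_of_real (x + 2 * pi * of_int k)) = exp (\<i> * complex_of_real x)"
proof -
  have "\<i> * complex_of_real (x + 2 * pi * of_int k) = \<i> * complex_of_real x + \<i> * (of_int k * (of_real pi * 2))"
    by (simp add: algebra_simps)
  then show ?thesis by (simp only: exp_plus_2pin)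
qed

lemma exp_neg: "- exp (\<i> * complex_of_real x) = exp (\<i> * complex_of_real (pi + x))"
proof -
  have "\<i> * complex_of_real (pi + x) = complex_of_real pi * \<i> + \<i> * complex_of_real x"
    by (simp add: algebra_simps)
  then have "exp (\<i> * complex_of_real (pi + x)) = exp (complex_of_real pi * \<i>) * exp (\<i> * complex_of_real x)"
    by (simp only: exp_add)
  then show ?thesis by (simp add: exp_pi_i)
qed

lemma prod_exp: "(\<Prod>i<(N::nat). exp (\<i> * complex_of_real (f i))) = exp (\<i> * complex_of_real (\<Sum>i<N. f i))"
proof -
  have "(\<Prod>i<N. exp (\<i> * complex_of_real (f i))) = exp (\<Sum>i<N. \<i> * complex_of_real (f i))"
    by (rule exp_sum[symmetric]) simp
  also have "(\<Sum>i<N. \<i> * complex_of_real (f i)) = \<i> * complex_of_real (\<Sum>i<N. f i)"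
    by (simp add: sum_distrib_left)
  finally show ?thesis .
qed

definition base :: "nat \<Rightarrow> (nat \<Rightarrow> 'n::finite) \<Rightarrow> real ^ 'n" where
  "base N e = vecof N e (inva N (\<Prod>i<N. [:- exp (\<i> * complex_of_real pi), 1:]))"

lemma path_to_base:
  assumes N: "N \<ge> 2" and e: "bij_betw e {1..N-1} (UNIV :: 'n::finite set)" and w: "w \<in> W_set N e"
  shows "path_component (W_set N e) w (base N e)"
proof -
  define p where "p = PW N e w"
  note F = PW_facts[OF N, of e w]
  obtain \<rho> where pr: "p = (\<Prod>i<N. [:- \<rho> i, 1:])"
    using monic_factor[of p] F unfolding p_def by auto
  have ru: "cmod (\<rho> i) = 1" if "i < N" for i
  proof -
    have "poly p (\<rho> i) = (\<Prod>j<N. \<rho> i - \<rho> j)" unfolding pr by (rule poly_prod_lin)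
    also have "\<dots> = 0" using that by (intro prod_zero) auto
    finally show ?thesis using w unfolding W_set_def p_def PW_def by auto
  qed
  define \<theta> where "\<theta> i = Arg (\<rho> i)" for i
  have eth: "exp (\<i> * complex_of_real (\<theta> i)) = \<rho> i" if "i < N" for i
    using ru[OF that] complex_norm_eq_1_exp_eq unfolding \<theta>_def by blast
  have "1 = poly p 0" using poly_assoc_0[OF N] unfolding p_def PW_def by simp
  also have "\<dots> = (\<Prod>i<N. - \<rho> i)" unfolding pr poly_prod_lin by simp
  also have "\<dots> = (\<Prod>i<N. exp (\<i> * complex_of_real (pi + \<theta> i)))"
    by (rule prod.cong[OF refl]) (simp only: exp_neg[symmetric], simp add: eth)
  also have "\<dots> = exp (\<i> * complex_of_real (\<Sum>i<N. pi + \<theta> i))" by (rule prod_exp)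
  finally have "exp (\<i> * complex_of_real (\<Sum>i<N. pi + \<theta> i)) = 1" by simp
  then obtain n :: int where n: "(\<Sum>i<N. pi + \<theta> i) = of_int (2 * n) * pi"
    unfolding exp_eq_1 by auto
  define k :: int where "k = int N - n"
  define \<theta>' where "\<theta>' i = \<theta> i + (if i = 0 then 2 * pi * of_int k else 0)" for i
  have eth': "exp (\<i> * complex_of_real (\<theta>' i)) = \<rho> i" if "i < N" for i
    unfolding \<theta>'_def using eth[OF that] exp_shift[of "\<theta> i" k] by auto
  have s\<theta>': "(\<Sum>i<N. \<theta>' i) = N * pi"
  proof -
    have "(\<Sum>i<N. \<theta>' i) = (\<Sum>i<N. \<theta> i) + (\<Sum>i<N. if i = 0 then 2 * pi * of_int k else 0)"
      unfolding \<theta>'_def by (simp add: sum.distrib)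
    also have "(\<Sum>i<N. if i = 0 then 2 * pi * of_int k else 0) = 2 * pi * of_int k"
      using N by (subst sum.delta) auto
    also have "(\<Sum>i<N. \<theta> i) = of_int (2 * n) * pi - N * pi"
      using n by (simp add: sum.distrib)
    finally show ?thesis unfolding k_def by (simp add: algebra_simps)
  qed
  define \<phi> where "\<phi> t i = (1 - t) * \<theta>' i + t * pi" for t i
  define \<alpha> where "\<alpha> t i = exp (\<i> * complex_of_real (\<phi> t i))" for t i
  have s\<phi>: "(\<Sum>i<N. \<phi> t i) = N * pi" for t
  proof -
    have "(\<Sum>i<N. \<phi> t i) = (\<Sum>i<N. (1 - t) * \<theta>' i) + (\<Sum>i<N. t * pi)"
      unfolding \<phi>_def by (rule sum.distrib)
    also have "\<dots> = (1 - t) * (\<Sum>i<N. \<theta>' i) + N * (t * pi)" by (simp add: sum_distrib_left)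
    also have "\<dots> = N * pi" unfolding s\<theta>' by (simp add: algebra_simps)
    finally show ?thesis .
  qed
  have au: "cmod (\<alpha> t i) = 1" for t i unfolding \<alpha>_def by simp
  have ap: "(\<Prod>i<N. - \<alpha> t i) = 1" for t
  proof -
    have "(\<Prod>i<N. - \<alpha> t i) = (\<Prod>i<N. exp (\<i> * complex_of_real (pi + \<phi> t i)))"
      unfolding \<alpha>_def by (rule prod.cong[OF refl]) (simp only: exp_neg)
    also have "\<dots> = exp (\<i> * complex_of_real (\<Sum>i<N. pi + \<phi> t i))" by (rule prod_exp)
    also have "(\<Sum>i<N. pi + \<phi> t i) = 0 + 2 * pi * of_int (int N)"
      by (simp add: sum.distrib s\<phi>)
    also have "exp (\<i> * complex_of_real (0 + 2 * pi * of_int (int N))) = 1"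
      by (simp only: exp_shift) simp
    finally show ?thesis .
  qed
  define Q where "Q t = (\<Prod>i<N. [:- \<alpha> t i, 1:])" for t
  have QF: "assoc_poly N (inva N (Q t)) = Q t" "\<And>z. poly (Q t) z = 0 \<Longrightarrow> cmod z = 1" for t
    unfolding Q_def using Q_facts[OF N, of "\<alpha> t"] au ap by auto
  define g where "g t = vecof N e (inva N (Q t))" for t
  have "path g" unfolding path_def g_def
  proof (rule cont_vecof)
    fix m
    show "continuous_on {0..1} (\<lambda>t. coeff (Q t) m)"
      unfolding Q_def by (rule cont_coeff_prod) (auto simp: \<alpha>_def \<phi>_def intro!: continuous_intros)
  qed
  moreover have "path_image g \<subseteq> W_set N e"
  proof
    fix x assume "x \<in> path_image g"
    then obtain t where x: "x = g t" unfolding path_image_def by auto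
    have "assoc_poly N (\<lambda>j. x $ e j) = Q t"
      using PW_vecof[OF e, of "inva N (Q t)"] QF(1)[of t] unfolding x g_def PW_def by simp
    then show "x \<in> W_set N e" unfolding W_set_def using QF(2) by auto
  qed
  moreover have "pathstart g = w"
  proof -
    have "Q 0 = p" unfolding Q_def pr \<alpha>_def \<phi>_def
      by (rule prod.cong[OF refl]) (simp add: eth')
    then show ?thesis unfolding pathstart_def g_def using vecof_PW[OF N e, of w] p_def by simp
  qed
  moreover have "pathfinish g = base N e"
    unfolding pathfinish_def g_def base_def Q_def \<alpha>_def \<phi>_def by simp
  ultimately show ?thesis unfolding path_component_def by blast
qed

lemma W_path_connected:
  assumes N: "N \<ge> 2" and e: "bij_betw e {1..N-1} (UNIV :: 'n::finite set)"
  shows "path_connected (W_set N e)"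
  unfolding path_connected_component
proof (intro ballI)
  fix x y assume "x \<in> W_set N e" "y \<in> W_set N e"
  then have "path_component (W_set N e) x (base N e)" "path_component (W_set N e) y (base N e)"
    using path_to_base[OF N e] by auto
  then show "path_component (W_set N e) x y"
    by (meson path_component_sym path_component_trans)
qed


lemma zero_interior:
  assumes N: "N \<ge> 2"
  shows "(0 :: real ^ 'n::finite) \<in> interior (W_set N e)"
proof -
  let ?p = "PW N e (0 :: real ^ 'n)"
  have c0: "assoc_coeff N (\<lambda>j. (0 :: real ^ 'n) $ e j) n = 0" for n
    by (simp add: assoc_coeff_def)
  have pp: "poly ?p z = z ^ N + 1" for z
    unfolding PW_def poly_assoc c0 by simp
  have fe: "poly ?p = (\<lambda>z. z ^ N + 1)" using pp by auto
  have w0: "0 \<in> W_set N e"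
    unfolding W_set_def
  proof safe
    fix z :: complex assume "poly (assoc_poly N (\<lambda>j. (0 :: real ^ 'n) $ e j)) z = 0"
    then have "z ^ N + 1 = 0" using pp[of z] unfolding PW_def by simp
    then have "z ^ N = -1" by (simp add: eq_neg_iff_add_eq_0)
    then have "cmod z ^ N = 1 ^ N" by (metis norm_minus_cancel norm_one norm_power power_one)
    then show "cmod z = 1" using N by (intro power_eq_imp_eq_base[of "cmod z" N 1]) auto
  qed
  have nc: "\<forall>z. poly ?p z = 0 \<longrightarrow> poly (pderiv ?p) z \<noteq> 0"
  proof safe
    fix z assume z1: "poly ?p z = 0" and z2: "poly (pderiv ?p) z = 0"
    have d1: "((\<lambda>z. z ^ N + 1) has_field_derivative poly (pderiv ?p) z) (at z)"
      using poly_DERIV[of ?p z] unfolding fe .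
    have d2: "((\<lambda>z. z ^ N + 1) has_field_derivative of_nat N * z ^ (N - 1)) (at z)"
      by (auto intro!: derivative_eq_intros)
    have "of_nat N * z ^ (N - 1) = 0" using DERIV_unique[OF d1 d2] z2 by simp
    then have "z = 0" using N by simp
    then show False using z1 pp[of z] N by (simp add: power_0_left)
  qed
  show ?thesis by (rule interior_simple[OF N w0 nc])
qed

lemma W_measure:
  assumes N: "N \<ge> 2"
  shows "emeasure lborel (W_set N (e :: nat \<Rightarrow> 'n::finite)) > 0"
proof -
  obtain r where r: "r > 0" "ball (0 :: real ^ 'n) r \<subseteq> W_set N e"
    using zero_interior[OF N, of e] unfolding mem_interior by blast
  have "0 < emeasure lborel (ball (0 :: real ^ 'n) r)"
    using r(1) by (simp add: emeasure_ball unit_ball_vol_pos)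
  also have "\<dots> \<le> emeasure lborel (W_set N e)"
    by (rule emeasure_mono[OF r(2)]) (simp add: borel_closed W_closed[OF N])
  finally show ?thesis .
qed

lemma W_frontier:
  assumes N: "N \<ge> 2" and e: "bij_betw e {1..N-1} (UNIV :: 'n::finite set)"
  shows "frontier (W_set N e) = {w \<in> W_set N e. discriminant (assoc_poly N (\<lambda>j. w $ e j)) = 0}"
proof -
  have fr: "frontier (W_set N e) = W_set N e - interior (W_set N e)"
    unfolding frontier_def using W_closed[OF N, of e] by (simp add: closure_closed)
  have "w \<notin> interior (W_set N e) \<longleftrightarrow> discriminant (assoc_poly N (\<lambda>j. w $ e j)) = 0"
    if w: "w \<in> W_set N e" for w
  proof -
    note F = PW_facts[OF N, of e w]
    have "discriminant (assoc_poly N (\<lambda>j. w $ e j)) = 0 \<longleftrightarrow>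
          (\<exists>z. poly (PW N e w) z = 0 \<and> poly (pderiv (PW N e w)) z = 0)"
      using disc_zero_iff[OF F(3) F(4)] unfolding PW_def .
    moreover have "w \<notin> interior (W_set N e) \<longleftrightarrow>
          (\<exists>z. poly (PW N e w) z = 0 \<and> poly (pderiv (PW N e w)) z = 0)"
      using not_interior[OF N e w] interior_simple[OF N w] by blast
    ultimately show ?thesis by simp
  qed
  then show ?thesis unfolding fr by blast
qed


theorem mainTheorem5:
  fixes N :: nat and e :: "nat \<Rightarrow> 'n::finite"
  assumes "N \<ge> 2"
    and "CARD('n) = N - 1"
    and "bij_betw e {1..N-1} (UNIV :: 'n set)"
  shows "closed (W_set N e) \<and>
         path_connected (W_set N e) \<and>
         emeasure lborel (W_set N e) > 0 \<and>
         frontier (W_set N e) =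
           {w \<in> W_set N e. discriminant (assoc_poly N (\<lambda>j. w $ e j)) = 0}"
  using W_closed[OF assms(1)] W_path_connected[OF assms(1) assms(3)] W_measure[OF assms(1)]
    W_frontier[OF assms(1) assms(3)] by blast

end
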